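(* Let $G$ be a finite group with $|G'|=2$, and let $g\in G$ with $\mathrm{ord}(g)=n$. (1) $g\sim g^{[n+1]}$, and hence $[g^{[n]}]$ is an idempotent of $\mathcal C(\mathcal B(G),\mathcal F(G))$. (2) If $k\in[1,n]$ is odd and $g^k\notin\mathsf Z(G)$, then $g^{[k]}\sim g^k$ (where $g^k$ denotes the one-term sequence consisting of the group element $g^k$). (3) If $g,h\in G\setminus\mathsf Z(G)$ with $gh=hg$, then $g\boldsymbol{\cdot}h\not\sim gh$ provided that either (a) $gh\in\mathsf Z(G)$, or (b) there is $g_0\in G$ with $g_0g\neq gg_0$ and $g_0h\neq hg_0$.
   Context: Let $G$ be a finite group written multiplicatively with identity $1_G$; $G'$ is its commutator subgroup and $\mathsf Z(G)$ its center. $\mathcal F(G)$ is the free abelian monoid with basis $G$; its elements are sequences $S=g_1\boldsymbol{\cdot}\ldots\boldsymbol{\cdot}g_\ell$ (operation $\boldsymbol{\cdot}$ = concatenation; $g^{[k]}$ denotes the sequence of $k$ copies of $g$; a group element is also viewed as a one-term sequence). $\pi(S)=\{g_{\tau(1)}\cdots g_{\tau(\ell)}:\tau\text{ a permutation of }[1,\ell]\}$, $\pi$ of the empty sequence is $\{1_G\}$, and $\mathcal B(G)=\{S\in\mathcal F(G):1_G\in\pi(S)\}$. For $S,S'\in\mathcal F(G)$, $S\sim S'$ means: for all $T\in\mathcal F(G)$, $S\boldsymbol{\cdot}T\in\mathcal B(G)\iff S'\boldsymbol{\cdot}T\in\mathcal B(G)$; this is a congruence, $[S]$ is the class of $S$,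 and $\mathcal C(\mathcal B(G),\mathcal F(G))$ is the set of classes, an additively written commutative semigroup with $[S]+[T]=[S\boldsymbol{\cdot}T]$. *)

theory Defs
  imports "HOL-Algebra.Algebra" "HOL-Library.Multiset"
begin

definition center :: "('a, 'b) monoid_scheme \<Rightarrow> 'a set" where
  "center G = {z \<in> carrier G. \<forall>x \<in> carrier G. z \<otimes>\<^bsub>G\<^esub> x = x \<otimes>\<^bsub>G\<^esub> z}"

text \<open>Sequences over G are finite multisets with support in carrier G (the free abelian monoid F(G)).\<close>
definition seqs :: "('a, 'b) monoid_scheme \<Rightarrow> 'a multiset set" where
  "seqs G = {S. set_mset S \<subseteq> carrier G}"

definition seq_prods :: "('a, 'b) monoid_scheme \<Rightarrow> 'a multiset \<Rightarrow> 'a set" where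
  "seq_prods G S = {foldr (\<lambda>x y. x \<otimes>\<^bsub>G\<^esub> y) xs \<one>\<^bsub>G\<^esub> | xs. mset xs = S}"

definition prod_one_seqs :: "('a, 'b) monoid_scheme \<Rightarrow> 'a multiset set" where
  "prod_one_seqs G = {S \<in> seqs G. \<one>\<^bsub>G\<^esub> \<in> seq_prods G S}"

text \<open>The congruence S ~ S' defining C(B(G),F(G)).\<close>
definition seq_equiv :: "('a, 'b) monoid_scheme \<Rightarrow> 'a multiset \<Rightarrow> 'a multiset \<Rightarrow> bool" where
  "seq_equiv G S S' \<longleftrightarrow>
     (\<forall>T \<in> seqs G. (S + T \<in> prod_one_seqs G) \<longleftrightarrow> (S' + T \<in> prod_one_seqs G))"

end

theory Submission imports Defs begin

definition lprod :: "('a, 'b) monoid_scheme \<Rightarrow> 'a list \<Rightarrow> 'a" where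
  "lprod G xs = foldr (\<lambda>x y. x \<otimes>\<^bsub>G\<^esub> y) xs \<one>\<^bsub>G\<^esub>"

definition commset :: "('a, 'b) monoid_scheme \<Rightarrow> 'a set \<Rightarrow> bool" where
  "commset G A \<longleftrightarrow> (\<forall>x\<in>A. \<forall>y\<in>A. x \<otimes>\<^bsub>G\<^esub> y = y \<otimes>\<^bsub>G\<^esub> x)"

lemma seq_prods_lprod: "seq_prods G S = {lprod G xs | xs. mset xs = S}"
  unfolding seq_prods_def lprod_def by simp

locale c2grp = group G for G (structure) +
  fixes c
  assumes c_carr: "c \<in> carrier G" and c_ne: "c \<noteq> \<one>" and c_sq: "c \<otimes> c = \<one>"
  and c_cen: "\<And>x. x \<in> carrier G \<Longrightarrow> c \<otimes> x = x \<otimes> c"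
  and comm2: "\<And>x y. x \<in> carrier G \<Longrightarrow> y \<in> carrier G \<Longrightarrow> x \<otimes> y = y \<otimes> x \<or> x \<otimes> y = c \<otimes> (y \<otimes> x)"
begin

lemma lprod_Nil[simp]: "lprod G [] = \<one>" by (simp add: lprod_def)
lemma lprod_Cons[simp]: "lprod G (x # xs) = x \<otimes> lprod G xs" by (simp add: lprod_def)

lemma lprod_closed[simp]: "set xs \<subseteq> carrier G \<Longrightarrow> lprod G xs \<in> carrier G"
  by (induction xs) auto

lemma lprod_append: "set xs \<subseteq> carrier G \<Longrightarrow> set ys \<subseteq> carrier G \<Longrightarrow>
   lprod G (xs @ ys) = lprod G xs \<otimes> lprod G ys"
  by (induction xs) (auto simp: m_assoc)

lemma lprod_replicate: "x \<in> carrier G \<Longrightarrow> lprod G (replicate n x) = x [^] n"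
  by (induction n) (auto intro: group_commutes_pow[symmetric])

lemma comm_lprod: "x \<in> carrier G \<Longrightarrow> set ys \<subseteq> carrier G \<Longrightarrow> (\<forall>y\<in>set ys. x \<otimes> y = y \<otimes> x)
   \<Longrightarrow> x \<otimes> lprod G ys = lprod G ys \<otimes> x"
proof (induction ys)
  case Nil then show ?case by simp
next
  case (Cons y ys)
  have yc: "y \<in> carrier G" "set ys \<subseteq> carrier G" "lprod G ys \<in> carrier G" using Cons.prems by auto
  have xy: "x \<otimes> y = y \<otimes> x" using Cons.prems by simp
  have ih: "x \<otimes> lprod G ys = lprod G ys \<otimes> x" using Cons.IH Cons.prems by simp
  have "x \<otimes> (y \<otimes> lprod G ys) = (x \<otimes> y) \<otimes> lprod G ys" using yc Cons.prems(1) by (simp only: m_assoc)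
  also have "\<dots> = y \<otimes> (x \<otimes> lprod G ys)" using yc Cons.prems(1) xy by (simp only: m_assoc)
  also have "\<dots> = y \<otimes> (lprod G ys \<otimes> x)" using ih by simp
  also have "\<dots> = (y \<otimes> lprod G ys) \<otimes> x" using yc Cons.prems(1) by (simp only: m_assoc)
  finally show ?case by simp
qed

lemma c_mid: "a \<in> carrier G \<Longrightarrow> b \<in> carrier G \<Longrightarrow> a \<otimes> (c \<otimes> b) = c \<otimes> (a \<otimes> b)"
  by (metis c_carr c_cen m_assoc)

lemma cc: "a \<in> carrier G \<Longrightarrow> c \<otimes> (c \<otimes> a) = a"
  by (metis c_carr c_sq m_assoc l_one)

lemma K1: "set xs \<subseteq> carrier G \<Longrightarrow> mset ys = mset xs \<Longrightarrow>
   (lprod G ys = lprod G xs \<or> lprod G ys = c \<otimes> lprod G xs) \<and>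
   (commset G (set xs) \<longrightarrow> lprod G ys = lprod G xs)"
proof (induction xs arbitrary: ys)
  case Nil then show ?case by simp
next
  case (Cons x xs)
  have "x \<in> set ys" using Cons.prems by (metis list.set_intros(1) set_mset_mset)
  then obtain ys1 ys2 where ys: "ys = ys1 @ x # ys2" by (meson split_list)
  have m: "mset (ys1 @ ys2) = mset xs" using Cons.prems ys by simp
  have ysc: "set ys \<subseteq> carrier G" using Cons.prems by (metis set_mset_mset)
  have xc: "x \<in> carrier G" and xsc: "set xs \<subseteq> carrier G" using Cons.prems by auto
  have y1c: "set ys1 \<subseteq> carrier G" and y2c: "set ys2 \<subseteq> carrier G" using ysc ys by auto
  note IH = Cons.IH[OF xsc m]
  define A where "A = lprod G ys1"
  define B where "B = lprod G ys2"
  define Q where "Q = lprod G xs"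
  have Ac: "A \<in> carrier G" and Bc: "B \<in> carrier G" and Qc: "Q \<in> carrier G"
    using y1c y2c xsc by (auto simp: A_def B_def Q_def)
  have ly: "lprod G ys = A \<otimes> (x \<otimes> B)" using ys y1c y2c xc by (simp add: lprod_append A_def B_def)
  have l12: "lprod G (ys1 @ ys2) = A \<otimes> B" using y1c y2c by (simp add: lprod_append A_def B_def)
  have lx: "lprod G (x # xs) = x \<otimes> Q" by (simp add: Q_def)
  have ly2: "lprod G ys = x \<otimes> (A \<otimes> B) \<or> lprod G ys = c \<otimes> (x \<otimes> (A \<otimes> B))"
    using comm2[OF Ac xc] ly by (metis Ac Bc xc m_assoc c_carr m_closed)
  have AB: "A \<otimes> B = Q \<or> A \<otimes> B = c \<otimes> Q" using IH l12 Q_def by simp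
  have part1: "lprod G ys = lprod G (x # xs) \<or> lprod G ys = c \<otimes> lprod G (x # xs)"
    using ly2 AB lx c_mid[OF xc Qc] cc[OF m_closed[OF xc Qc]] by auto
  have part2: "lprod G ys = lprod G (x # xs)" if cs: "commset G (set (x # xs))"
  proof -
    have "commset G (set xs)" using cs by (auto simp: commset_def)
    then have "A \<otimes> B = Q" using IH l12 Q_def by simp
    have "\<forall>y\<in>set ys1. x \<otimes> y = y \<otimes> x"
    proof
      fix y assume "y \<in> set ys1"
      then have "y \<in> set (x # xs)" using Cons.prems ys by (metis Un_iff set_append set_mset_mset)
      then show "x \<otimes> y = y \<otimes> x" using cs by (auto simp: commset_def)
    qed
    then have "x \<otimes> A = A \<otimes> x" using comm_lprod[OF xc y1c] A_def by simp
    then have "lprod G ys = x \<otimes> (A \<otimes> B)" using ly by (metis Ac Bc xc m_assoc)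
    then show ?thesis using \<open>A \<otimes> B = Q\<close> lx by simp
  qed
  show ?case using part1 part2 by blast
qed


lemma Char: assumes xsc: "set xs \<subseteq> carrier G"
  shows "seq_prods G (mset xs) = (if commset G (set xs) then {lprod G xs} else {lprod G xs, c \<otimes> lprod G xs})"
proof (cases "commset G (set xs)")
  case True
  have "seq_prods G (mset xs) \<subseteq> {lprod G xs}"
  proof
    fix p assume "p \<in> seq_prods G (mset xs)"
    then obtain ys where "mset ys = mset xs" "p = lprod G ys" by (auto simp: seq_prods_lprod)
    then show "p \<in> {lprod G xs}" using K1[OF xsc, of ys] True by simp
  qed
  moreover have "lprod G xs \<in> seq_prods G (mset xs)" by (auto simp: seq_prods_lprod)
  ultimately show ?thesis using True by auto
next
  case False
  have sub: "seq_prods G (mset xs) \<subseteq> {lprod G xs, c \<otimes> lprod G xs}"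
  proof
    fix p assume "p \<in> seq_prods G (mset xs)"
    then obtain ys where "mset ys = mset xs" "p = lprod G ys" by (auto simp: seq_prods_lprod)
    then show "p \<in> {lprod G xs, c \<otimes> lprod G xs}" using K1[OF xsc, of ys] by blast
  qed
  obtain x y where x: "x \<in> set xs" and y: "y \<in> set xs" and ne: "x \<otimes> y \<noteq> y \<otimes> x"
    using False by (auto simp: commset_def)
  have xy: "x \<noteq> y" using ne by auto
  define R where "R = remove1 x (remove1 y xs)"
  have xr: "x \<in> set (remove1 y xs)" using x xy by (simp add: in_set_remove1)
  have a: "add_mset x (mset R) = mset (remove1 y xs)" unfolding R_def
    using xr by (metis mset_remove1 insert_DiffM set_mset_mset)
  have b: "add_mset y (mset (remove1 y xs)) = mset xs"
    using y by (metis mset_remove1 insert_DiffM set_mset_mset)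
  have m1: "mset (x # y # R) = mset xs"
    using a b by (metis add_mset_commute mset.simps(2))
  have m2: "mset (y # x # R) = mset xs"
    using a b by (metis mset.simps(2))
  have xc: "x \<in> carrier G" and yc: "y \<in> carrier G" using x y xsc by auto
  have Rc: "set R \<subseteq> carrier G" using xsc unfolding R_def
    by (meson dual_order.trans set_remove1_subset)
  have Rpc: "lprod G R \<in> carrier G" using Rc by simp
  have d: "lprod G (x # y # R) \<noteq> lprod G (y # x # R)"
  proof
    assume "lprod G (x # y # R) = lprod G (y # x # R)"
    then have "(x \<otimes> y) \<otimes> lprod G R = (y \<otimes> x) \<otimes> lprod G R"
      using xc yc Rpc by (simp add: m_assoc)
    then show False using ne xc yc Rpc by (metis m_closed right_cancel)
  qed
  have i1: "lprod G (x # y # R) \<in> seq_prods G (mset xs)" unfolding seq_prods_lprod using m1 by blast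
  have i2: "lprod G (y # x # R) \<in> seq_prods G (mset xs)" unfolding seq_prods_lprod using m2 by blast
  have "{lprod G xs, c \<otimes> lprod G xs} \<subseteq> seq_prods G (mset xs)"
  proof -
    define p where "p = lprod G (x # y # R)"
    define q where "q = lprod G (y # x # R)"
    have pi: "p \<in> seq_prods G (mset xs)" and qi: "q \<in> seq_prods G (mset xs)" and pq: "p \<noteq> q"
      using i1 i2 d by (simp_all add: p_def q_def)
    have p2: "p = lprod G xs \<or> p = c \<otimes> lprod G xs" using pi sub by blast
    have q2: "q = lprod G xs \<or> q = c \<otimes> lprod G xs" using qi sub by blast
    show ?thesis using p2 q2 pi qi pq by auto
  qed
  then show ?thesis using sub False by auto
qed

lemma Bmem: assumes xsc: "set xs \<subseteq> carrier G"
  shows "mset xs \<in> prod_one_seqs G \<longleftrightarrow>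
     (lprod G xs = \<one> \<or> (\<not> commset G (set xs) \<and> lprod G xs = c))"
proof -
  have P: "lprod G xs \<in> carrier G" using xsc by simp
  have "c \<otimes> lprod G xs = \<one> \<longleftrightarrow> lprod G xs = c"
  proof
    assume h: "c \<otimes> lprod G xs = \<one>"
    have "lprod G xs = c \<otimes> (c \<otimes> lprod G xs)" using cc[OF P] by simp
    also have "\<dots> = c" using h c_carr by simp
    finally show "lprod G xs = c" .
  next
    assume "lprod G xs = c" then show "c \<otimes> lprod G xs = \<one>" using c_sq by simp
  qed
    moreover have "mset xs \<in> prod_one_seqs G \<longleftrightarrow> \<one> \<in> seq_prods G (mset xs)"
    using xsc by (simp add: prod_one_seqs_def seqs_def)
  ultimately show ?thesis unfolding Char[OF xsc] by (cases "commset G (set xs)") auto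
qed

lemma Lequiv: assumes "set xs \<subseteq> carrier G" "set xs' \<subseteq> carrier G"
  and "lprod G xs = lprod G xs'"
  and "\<And>A. A \<subseteq> carrier G \<Longrightarrow> commset G (set xs \<union> A) \<longleftrightarrow> commset G (set xs' \<union> A)"
  shows "seq_equiv G (mset xs) (mset xs')"
  unfolding seq_equiv_def
proof
  fix T assume "T \<in> seqs G"
  then obtain ts where ts: "mset ts = T" "set ts \<subseteq> carrier G"
    by (metis ex_mset seqs_def mem_Collect_eq set_mset_mset)
  have e1: "mset xs + T = mset (xs @ ts)" and e2: "mset xs' + T = mset (xs' @ ts)" using ts by auto
  have lp: "lprod G (xs @ ts) = lprod G (xs' @ ts)" using assms ts by (simp add: lprod_append)
  have cs: "commset G (set (xs @ ts)) \<longleftrightarrow> commset G (set (xs' @ ts))" using assms ts by simp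
  have s1: "set (xs @ ts) \<subseteq> carrier G" "set (xs' @ ts) \<subseteq> carrier G" using assms ts by auto
  show "(mset xs + T \<in> prod_one_seqs G) = (mset xs' + T \<in> prod_one_seqs G)"
    unfolding e1 e2 Bmem[OF s1(1)] Bmem[OF s1(2)] using lp cs by simp
qed


lemma commset_insert: "commset G (insert a A) \<longleftrightarrow> commset G A \<and> (\<forall>t\<in>A. t \<otimes> a = a \<otimes> t)"
proof
  assume "commset G (insert a A)" then show "commset G A \<and> (\<forall>t\<in>A. t \<otimes> a = a \<otimes> t)"
    unfolding commset_def by blast
next
  assume h: "commset G A \<and> (\<forall>t\<in>A. t \<otimes> a = a \<otimes> t)"
  show "commset G (insert a A)" unfolding commset_def
  proof (intro ballI)
    fix x y assume x: "x \<in> insert a A" and y: "y \<in> insert a A"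
    show "x \<otimes> y = y \<otimes> x"
    proof (cases "x = a")
      case True
      then show ?thesis using y h by (cases "y = a") (auto simp: commset_def)
    next
      case False
      then have "x \<in> A" using x by simp
      then show ?thesis using y h by (cases "y = a") (auto simp: commset_def)
    qed
  qed
qed

lemma part1a: assumes g: "g \<in> carrier G" and fin: "finite (carrier G)"
  shows "seq_equiv G {#g#} (replicate_mset (ord g + 1) g)"
proof -
  have "seq_equiv G (mset [g]) (mset (replicate (ord g + 1) g))"
  proof (rule Lequiv)
    show "lprod G [g] = lprod G (replicate (ord g + 1) g)"
      using g by (simp add: lprod_replicate)
  qed (use g ord_ge_1[OF fin g] in auto)
  then show ?thesis by simp
qed

lemma part1b: assumes g: "g \<in> carrier G" and fin: "finite (carrier G)"
  shows "seq_equiv G (replicate_mset (ord g) g + replicate_mset (ord g) g) (replicate_mset (ord g) g)"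
proof -
  have n: "ord g \<noteq> 0" using ord_ge_1[OF fin g] by simp
  have "seq_equiv G (mset (replicate (ord g) g @ replicate (ord g) g)) (mset (replicate (ord g) g))"
  proof (rule Lequiv)
    show "lprod G (replicate (ord g) g @ replicate (ord g) g) = lprod G (replicate (ord g) g)"
    proof -
      have r: "set (replicate (ord g) g) \<subseteq> carrier G" using g by auto
      show ?thesis using g by (simp add: lprod_append[OF r r] lprod_replicate)
    qed
  qed (use g n in auto)
  then show ?thesis by simp
qed

lemma pow_anti: assumes t: "t \<in> carrier G" and g: "g \<in> carrier G" and tg: "t \<otimes> g = c \<otimes> (g \<otimes> t)"
  shows "t \<otimes> g [^] (k::nat) = c [^] k \<otimes> (g [^] k \<otimes> t)"
proof (induction k)
  case 0 then show ?case using t by simp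
next
  case (Suc k)
  have gk: "g [^] k \<in> carrier G" and ck: "c [^] k \<in> carrier G" using g c_carr by auto
  have "t \<otimes> g [^] Suc k = (t \<otimes> g [^] k) \<otimes> g" using t g gk by (simp add: m_assoc)
  also have "\<dots> = c [^] k \<otimes> (g [^] k \<otimes> (t \<otimes> g))" using Suc t g gk ck by (simp add: m_assoc)
  also have "\<dots> = c [^] k \<otimes> (g [^] k \<otimes> (c \<otimes> (g \<otimes> t)))" using tg by simp
  also have "\<dots> = (c [^] k \<otimes> c) \<otimes> ((g [^] k \<otimes> g) \<otimes> t)"
    using t g gk ck c_carr c_mid[of "g [^] k" "g \<otimes> t"] by (simp add: m_assoc)
  also have "\<dots> = c [^] Suc k \<otimes> (g [^] Suc k \<otimes> t)" by simp
  finally show ?case .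
qed

lemma c_odd: "odd k \<Longrightarrow> c [^] (k::nat) = c"
proof -
  assume "odd k"
  then obtain m where k0: "k = 2 * m + 1" by (rule oddE)
  then have k: "k = Suc (2 * m)" by simp
  have "c [^] (2::nat) = \<one>" using c_sq c_carr by (simp add: numeral_2_eq_2)
  then have "c [^] (2 * m) = \<one>" using c_carr by (simp add: nat_pow_pow[symmetric])
  then show ?thesis using k c_carr by simp
qed

lemma comm_pow_iff: assumes t: "t \<in> carrier G" and g: "g \<in> carrier G" and k: "odd k"
  shows "t \<otimes> g [^] (k::nat) = g [^] k \<otimes> t \<longleftrightarrow> t \<otimes> g = g \<otimes> t"
proof
  assume "t \<otimes> g = g \<otimes> t"
  then have "g \<otimes> t = t \<otimes> g" by simp
  from group_commutes_pow[OF this g t, of k] show "t \<otimes> g [^] k = g [^] k \<otimes> t" by simp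
next
  assume h: "t \<otimes> g [^] k = g [^] k \<otimes> t"
  show "t \<otimes> g = g \<otimes> t"
  proof (rule ccontr)
    assume "t \<otimes> g \<noteq> g \<otimes> t"
    then have "t \<otimes> g = c \<otimes> (g \<otimes> t)" using comm2[OF t g] by blast
    then have "t \<otimes> g [^] k = c \<otimes> (g [^] k \<otimes> t)" using pow_anti[OF t g] c_odd[OF k] by simp
    then have "c \<otimes> (g [^] k \<otimes> t) = g [^] k \<otimes> t" using h by simp
    then show False using c_ne c_carr g t by simp
  qed
qed

lemma part2: assumes g: "g \<in> carrier G" and k: "odd k"
  shows "seq_equiv G (replicate_mset k g) {#g [^] (k::nat)#}"
proof -
  have k0: "k \<noteq> 0" using k by (cases k) auto
  have "seq_equiv G (mset (replicate k g)) (mset [g [^] k])"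
  proof (rule Lequiv)
    show "lprod G (replicate k g) = lprod G [g [^] k]" using g by (simp add: lprod_replicate)
  next
    fix A assume A: "A \<subseteq> carrier G"
    have "commset G (insert g A) \<longleftrightarrow> commset G (insert (g [^] k) A)"
      unfolding commset_insert using comm_pow_iff[OF _ g k] A by blast
    then show "commset G (set (replicate k g) \<union> A) \<longleftrightarrow> commset G (set [g [^] k] \<union> A)"
      using k0 by simp
  qed (use g in auto)
  then show ?thesis by simp
qed

lemma comm_inv: "a \<in> carrier G \<Longrightarrow> y \<in> carrier G \<Longrightarrow> y \<otimes> a = a \<otimes> y \<Longrightarrow> y \<otimes> inv a = inv a \<otimes> y"
proof -
  assume a: "a \<in> carrier G" and y: "y \<in> carrier G" and ya: "y \<otimes> a = a \<otimes> y"
  have ia: "inv a \<in> carrier G" using a by simp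
  have "inv a \<otimes> y = inv a \<otimes> (y \<otimes> (a \<otimes> inv a))" using a y by simp
  also have "\<dots> = inv a \<otimes> ((y \<otimes> a) \<otimes> inv a)" using a y ia by (simp only: m_assoc)
  also have "\<dots> = inv a \<otimes> ((a \<otimes> y) \<otimes> inv a)" using ya by simp
  also have "\<dots> = (inv a \<otimes> a) \<otimes> (y \<otimes> inv a)" using a y ia by (simp add: m_assoc[symmetric])
  also have "\<dots> = y \<otimes> inv a" using a y ia by simp
  finally show ?thesis by simp
qed

lemma comm_mult: "a \<in> carrier G \<Longrightarrow> b \<in> carrier G \<Longrightarrow> y \<in> carrier G \<Longrightarrow> y \<otimes> a = a \<otimes> y \<Longrightarrow> y \<otimes> b = b \<otimes> y
   \<Longrightarrow> y \<otimes> (a \<otimes> b) = (a \<otimes> b) \<otimes> y"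
proof -
  assume a: "a \<in> carrier G" and b: "b \<in> carrier G" and y: "y \<in> carrier G"
    and ya: "y \<otimes> a = a \<otimes> y" and yb: "y \<otimes> b = b \<otimes> y"
  have "y \<otimes> (a \<otimes> b) = (y \<otimes> a) \<otimes> b" using a b y by (simp only: m_assoc)
  also have "\<dots> = a \<otimes> (y \<otimes> b)" using a b y ya by (simp only: m_assoc)
  also have "\<dots> = a \<otimes> (b \<otimes> y)" using yb by simp
  also have "\<dots> = (a \<otimes> b) \<otimes> y" using a b y by (simp only: m_assoc)
  finally show ?thesis .
qed

lemma part3: assumes g: "g \<in> carrier G" and h: "h \<in> carrier G" and gh: "g \<otimes> h = h \<otimes> g"
  and g0: "g0 \<in> carrier G" and n1: "g0 \<otimes> g \<noteq> g \<otimes> g0" and n2: "g0 \<otimes> h \<noteq> h \<otimes> g0"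
  shows "\<not> seq_equiv G {#g, h#} {#g \<otimes> h#}"
proof
  assume eq: "seq_equiv G {#g, h#} {#g \<otimes> h#}"
  define u where "u = g \<otimes> h"
  have uc: "u \<in> carrier G" using g h by (simp add: u_def)
  have e1: "g0 \<otimes> g = c \<otimes> (g \<otimes> g0)" using comm2[OF g0 g] n1 by blast
  have e2: "g0 \<otimes> h = c \<otimes> (h \<otimes> g0)" using comm2[OF g0 h] n2 by blast
  have ug0: "g0 \<otimes> u = u \<otimes> g0"
  proof -
    have "g0 \<otimes> u = (g0 \<otimes> g) \<otimes> h" using g h g0 by (simp add: u_def m_assoc)
    also have "\<dots> = c \<otimes> (g \<otimes> (g0 \<otimes> h))" using e1 g h g0 c_carr by (simp add: m_assoc)
    also have "\<dots> = c \<otimes> (g \<otimes> (c \<otimes> (h \<otimes> g0)))" using e2 by simp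
    also have "\<dots> = c \<otimes> (c \<otimes> (g \<otimes> (h \<otimes> g0)))" using c_mid[of g "h \<otimes> g0"] g h g0 by simp
    also have "\<dots> = u \<otimes> g0" using cc g h g0 by (simp add: u_def m_assoc)
    finally show ?thesis .
  qed
  define x where "x = c \<otimes> inv (u \<otimes> g0)"
  have xc: "x \<in> carrier G" using uc g0 c_carr by (simp add: x_def)
  have prod: "u \<otimes> (g0 \<otimes> x) = c"
  proof -
    have "u \<otimes> (g0 \<otimes> x) = (u \<otimes> g0) \<otimes> (c \<otimes> inv (u \<otimes> g0))" using uc g0 c_carr by (simp add: x_def m_assoc)
    also have "\<dots> = c \<otimes> ((u \<otimes> g0) \<otimes> inv (u \<otimes> g0))"
      using uc g0 c_mid[of "u \<otimes> g0" "inv (u \<otimes> g0)"] by simp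
    also have "\<dots> = c" using uc g0 c_carr by simp
    finally show ?thesis .
  qed
  have comx: "y \<otimes> x = x \<otimes> y" if y: "y \<in> carrier G" "y \<otimes> u = u \<otimes> y" "y \<otimes> g0 = g0 \<otimes> y" for y
  proof -
    have "y \<otimes> (u \<otimes> g0) = (u \<otimes> g0) \<otimes> y" using comm_mult[OF uc g0 y(1)] y by simp
    then have "y \<otimes> inv (u \<otimes> g0) = inv (u \<otimes> g0) \<otimes> y" using comm_inv uc g0 y by simp
    moreover have iw: "inv (u \<otimes> g0) \<in> carrier G" using uc g0 by simp
    ultimately have "y \<otimes> (c \<otimes> inv (u \<otimes> g0)) = c \<otimes> (inv (u \<otimes> g0) \<otimes> y)"
      using c_mid[OF y(1) iw] by simp
    then show ?thesis unfolding x_def using y(1) iw c_carr by (simp add: m_assoc)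
  qed
  have cs: "commset G (set [u, g0, x])"
    using comx[OF uc] comx[OF g0] ug0 unfolding commset_def by auto
  have ncs: "\<not> commset G (set [g, h, g0, x])" using n1 unfolding commset_def by auto
  have Tin: "mset [g0, x] \<in> seqs G" using g0 xc by (simp add: seqs_def)
  have l1: "lprod G [g, h, g0, x] = c" using prod g h g0 xc by (simp add: u_def m_assoc)
  have l2: "lprod G [u, g0, x] = c" using prod xc by simp
  have m1: "{#g, h#} + mset [g0, x] = mset [g, h, g0, x]" by simp
  have m2: "{#g \<otimes> h#} + mset [g0, x] = mset [u, g0, x]" by (simp add: u_def)
  have A1: "{#g, h#} + mset [g0, x] \<in> prod_one_seqs G"
    unfolding m1 using Bmem[of "[g, h, g0, x]"] g h g0 xc l1 ncs by simp
  have A2: "{#g \<otimes> h#} + mset [g0, x] \<notin> prod_one_seqs G"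
    unfolding m2 using Bmem[of "[u, g0, x]"] uc g0 xc l2 cs c_ne by simp
  have "({#g, h#} + mset [g0, x] \<in> prod_one_seqs G) = ({#g \<otimes> h#} + mset [g0, x] \<in> prod_one_seqs G)"
    using eq Tin unfolding seq_equiv_def by blast
  then show False using A1 A2 by blast
qed


lemma part3a: assumes g: "g \<in> carrier G" and h: "h \<in> carrier G"
  and g0: "g0 \<in> carrier G" and n1: "g0 \<otimes> g \<noteq> g \<otimes> g0" and cu: "g0 \<otimes> (g \<otimes> h) = (g \<otimes> h) \<otimes> g0"
  shows "g0 \<otimes> h \<noteq> h \<otimes> g0"
proof
  assume e2: "g0 \<otimes> h = h \<otimes> g0"
  have e1: "g0 \<otimes> g = c \<otimes> (g \<otimes> g0)" using comm2[OF g0 g] n1 by blast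
  have "g0 \<otimes> (g \<otimes> h) = (g0 \<otimes> g) \<otimes> h" using g h g0 by (simp add: m_assoc)
  also have "\<dots> = c \<otimes> (g \<otimes> (g0 \<otimes> h))" using e1 g h g0 c_carr by (simp add: m_assoc)
  also have "\<dots> = c \<otimes> ((g \<otimes> h) \<otimes> g0)" using e2 g h g0 by (simp add: m_assoc)
  finally have "c \<otimes> ((g \<otimes> h) \<otimes> g0) = (g \<otimes> h) \<otimes> g0" using cu by simp
  then show False using c_ne c_carr g h g0 by simp
qed

end

lemma (in group) conj_eq: "x \<in> carrier G \<Longrightarrow> y \<in> carrier G \<Longrightarrow> d \<in> carrier G \<Longrightarrow>
   x \<otimes> y \<otimes> inv x = d \<Longrightarrow> x \<otimes> y = d \<otimes> x"
proof -
  assume x: "x \<in> carrier G" and y: "y \<in> carrier G" and d: "d \<in> carrier G" and e: "x \<otimes> y \<otimes> inv x = d"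
  have "d \<otimes> x = (x \<otimes> y \<otimes> inv x) \<otimes> x" using e by simp
  also have "\<dots> = x \<otimes> y" using x y by (simp add: m_assoc)
  finally show ?thesis by simp
qed

lemma (in group) comm_eq: "x \<in> carrier G \<Longrightarrow> y \<in> carrier G \<Longrightarrow> d \<in> carrier G \<Longrightarrow>
   x \<otimes> y \<otimes> inv x \<otimes> inv y = d \<Longrightarrow> x \<otimes> y = d \<otimes> (y \<otimes> x)"
proof -
  assume x: "x \<in> carrier G" and y: "y \<in> carrier G" and d: "d \<in> carrier G"
    and e: "x \<otimes> y \<otimes> inv x \<otimes> inv y = d"
  have "d \<otimes> (y \<otimes> x) = (x \<otimes> y \<otimes> inv x \<otimes> inv y) \<otimes> (y \<otimes> x)" using e by simp
  also have "\<dots> = x \<otimes> (y \<otimes> (inv x \<otimes> (inv y \<otimes> (y \<otimes> x))))" using x y by (simp add: m_assoc)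
  also have "inv y \<otimes> (y \<otimes> x) = x" using x y by (simp add: m_assoc[symmetric])
  finally show ?thesis using x y by simp
qed

theorem lemma3p9:
  fixes G (structure)
  assumes "group G" and "finite (carrier G)"
    and "card (derived G (carrier G)) = 2"
  shows
    "(\<forall>g \<in> carrier G.
        seq_equiv G {#g#} (replicate_mset (group.ord G g + 1) g)
      \<and> seq_equiv G (replicate_mset (group.ord G g) g + replicate_mset (group.ord G g) g)
                    (replicate_mset (group.ord G g) g))
   \<and> (\<forall>g \<in> carrier G. \<forall>k::nat. 1 \<le> k \<and> k \<le> group.ord G g \<and> odd k \<and> g [^] k \<notin> center G
        \<longrightarrow> seq_equiv G (replicate_mset k g) {#g [^] k#})
   \<and> (\<forall>g \<in> carrier G - center G. \<forall>h \<in> carrier G - center G.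
        g \<otimes> h = h \<otimes> g \<and>
        (g \<otimes> h \<in> center G \<or>
         (\<exists>g0 \<in> carrier G. g0 \<otimes> g \<noteq> g \<otimes> g0 \<and> g0 \<otimes> h \<noteq> h \<otimes> g0))
        \<longrightarrow> \<not> seq_equiv G {#g, h#} {#g \<otimes> h#})"
proof -
  interpret group G by fact
  define D where "D = derived G (carrier G)"
  have sub: "subgroup D G" using derived_is_subgroup[of "carrier G"] D_def by simp
  have nor: "D \<lhd> G" using derived_self_is_normal D_def by simp
  have one: "\<one> \<in> D" using subgroup.one_closed[OF sub] .
  have "\<exists>x y. D = {x, y} \<and> x \<noteq> y" using card_2_iff[THEN iffD1, OF assms(3)] unfolding D_def .
  then obtain a b where ab: "D = {a, b}" "a \<noteq> b" by blast
  define c where "c = (if a = \<one> then b else a)"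
  have cD1: "c \<in> D" using ab(1) by (simp add: c_def)
  have cD2: "c \<noteq> \<one>"
  proof (cases "a = \<one>")
    case True then show ?thesis using ab(2) by (simp add: c_def)
  next
    case False then show ?thesis by (simp add: c_def)
  qed
  have Dc: "D = {\<one>, c}"
  proof (cases "a = \<one>")
    case True then show ?thesis using ab(1) by (simp add: c_def)
  next
    case False
    then have "b = \<one>" using one ab(1) by simp
    then show ?thesis using ab(1) False by (simp add: c_def insert_commute)
  qed
  note cD = cD1 cD2
  have cc: "c \<in> carrier G" using cD1 subgroup.mem_carrier[OF sub] by simp
  have csq: "c \<otimes> c = \<one>"
  proof -
    have "c \<otimes> c \<in> D" using subgroup.m_closed[OF sub cD(1) cD(1)] .
    moreover have "c \<otimes> c \<noteq> c" using cc cD(2) by simp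
    ultimately show ?thesis using Dc by blast
  qed
  have cen: "c \<otimes> x = x \<otimes> c" if x: "x \<in> carrier G" for x
  proof -
    have "x \<otimes> c \<otimes> inv x \<in> D" using normal.inv_op_closed2[OF nor x cD(1)] .
    then have "x \<otimes> c \<otimes> inv x = \<one> \<or> x \<otimes> c \<otimes> inv x = c" using Dc by blast
    moreover have "x \<otimes> c \<otimes> inv x \<noteq> \<one>"
    proof
      assume "x \<otimes> c \<otimes> inv x = \<one>"
      then have "x \<otimes> c = \<one> \<otimes> x" using conj_eq[OF x cc] by simp
      then show False using x cc cD(2) by simp
    qed
    ultimately have "x \<otimes> c \<otimes> inv x = c" by blast
    then show ?thesis using conj_eq[OF x cc cc] by simp
  qed
  have com: "x \<otimes> y = y \<otimes> x \<or> x \<otimes> y = c \<otimes> (y \<otimes> x)" if x: "x \<in> carrier G" and y: "y \<in> carrier G" for x y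
  proof -
    have "x \<otimes> y \<otimes> inv x \<otimes> inv y \<in> derived_set G (carrier G)" using x y by blast
    then have "x \<otimes> y \<otimes> inv x \<otimes> inv y \<in> D" unfolding D_def derived_def by (rule generate.incl)
    then have "x \<otimes> y \<otimes> inv x \<otimes> inv y = \<one> \<or> x \<otimes> y \<otimes> inv x \<otimes> inv y = c" using Dc by blast
    moreover have "x \<otimes> y \<otimes> inv x \<otimes> inv y = \<one> \<Longrightarrow> x \<otimes> y = y \<otimes> x"
      using comm_eq[OF x y one_closed] x y by simp
    moreover have "x \<otimes> y \<otimes> inv x \<otimes> inv y = c \<Longrightarrow> x \<otimes> y = c \<otimes> (y \<otimes> x)"
      using comm_eq[OF x y cc] by simp
    ultimately show ?thesis by blast
  qed
  interpret C: c2grp G c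
  proof unfold_locales
    show "c \<in> carrier G" by (rule cc)
    show "c \<noteq> \<one>" by (rule cD2)
    show "c \<otimes> c = \<one>" by (rule csq)
    show "c \<otimes> x = x \<otimes> c" if "x \<in> carrier G" for x using that by (rule cen)
    show "x \<otimes> y = y \<otimes> x \<or> x \<otimes> y = c \<otimes> (y \<otimes> x)" if "x \<in> carrier G" "y \<in> carrier G" for x y
      using that by (rule com)
  qed
  have P1: "\<forall>g \<in> carrier G.
        seq_equiv G {#g#} (replicate_mset (ord g + 1) g)
      \<and> seq_equiv G (replicate_mset (ord g) g + replicate_mset (ord g) g) (replicate_mset (ord g) g)"
  proof
    fix g assume g: "g \<in> carrier G"
    show "seq_equiv G {#g#} (replicate_mset (ord g + 1) g)
      \<and> seq_equiv G (replicate_mset (ord g) g + replicate_mset (ord g) g) (replicate_mset (ord g) g)"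
      using C.part1a[OF g assms(2)] C.part1b[OF g assms(2)] by (rule conjI)
  qed
  have P2: "\<forall>g \<in> carrier G. \<forall>k::nat. 1 \<le> k \<and> k \<le> ord g \<and> odd k \<and> g [^] k \<notin> center G
        \<longrightarrow> seq_equiv G (replicate_mset k g) {#g [^] k#}"
  proof (intro ballI allI impI)
    fix g k assume g: "g \<in> carrier G" and k: "1 \<le> k \<and> k \<le> ord g \<and> odd k \<and> g [^] k \<notin> center G"
    show "seq_equiv G (replicate_mset k g) {#g [^] k#}" using C.part2[OF g] k by simp
  qed
  have P3: "\<not> seq_equiv G {#g, h#} {#g \<otimes> h#}"
    if g: "g \<in> carrier G - center G" and h: "h \<in> carrier G - center G" and gh: "g \<otimes> h = h \<otimes> g"
      and alt: "g \<otimes> h \<in> center G \<or> (\<exists>g0 \<in> carrier G. g0 \<otimes> g \<noteq> g \<otimes> g0 \<and> g0 \<otimes> h \<noteq> h \<otimes> g0)"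
    for g h
  proof -
    have gc: "g \<in> carrier G" and hc: "h \<in> carrier G" using g h by auto
    obtain g0 where g0: "g0 \<in> carrier G" "g0 \<otimes> g \<noteq> g \<otimes> g0" "g0 \<otimes> h \<noteq> h \<otimes> g0"
    proof (cases "g \<otimes> h \<in> center G")
      case True
      obtain g0 where g0c: "g0 \<in> carrier G" and n: "g \<otimes> g0 \<noteq> g0 \<otimes> g"
        using g unfolding center_def by blast
      have cu: "g0 \<otimes> (g \<otimes> h) = (g \<otimes> h) \<otimes> g0" using True g0c unfolding center_def by simp
      have n': "g0 \<otimes> g \<noteq> g \<otimes> g0" using n by simp
      have "g0 \<otimes> h \<noteq> h \<otimes> g0" using C.part3a[OF gc hc g0c n' cu] .
      then show ?thesis using that g0c n' by blast
    next
      case False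
      then show ?thesis using alt that by blast
    qed
    then show ?thesis using C.part3[OF gc hc gh] by blast
  qed
  have P3': "\<forall>g \<in> carrier G - center G. \<forall>h \<in> carrier G - center G.
        g \<otimes> h = h \<otimes> g \<and>
        (g \<otimes> h \<in> center G \<or>
         (\<exists>g0 \<in> carrier G. g0 \<otimes> g \<noteq> g \<otimes> g0 \<and> g0 \<otimes> h \<noteq> h \<otimes> g0))
        \<longrightarrow> \<not> seq_equiv G {#g, h#} {#g \<otimes> h#}"
    using P3 by blast
  show ?thesis using P1 P2 P3' by (intro conjI)
qed

end
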